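(* For every real $\lambda$, the sequence $\mathbf E\,e^{\lambda\hat Y_n}$ is nondecreasing in $n\ge0$ and converges to $\mathbf E\,e^{\lambda Y}$ as $n\to\infty$. In particular, $\mathbf E\,e^{\lambda\hat Y_n}\le\mathbf E\,e^{\lambda Y}$ for all $n\ge0$ and all $\lambda \in\mathbb R$.
   Context: Let $X_n$ be the number of comparisons used by randomized Quicksort (uniform random pivot) on $n$ distinct numbers. Equivalently, $X_0=0$ and $$X_n\stackrel{d}{=}X_{U_n-1}+X^*_{n-U_n}+n-1,$$ with $U_n$ uniform on $\{1,\dots,n\}$, $X_j^*\stackrel{d}{=}X_j$, all independent. Let $\mu_n=\mathbf EX_n=2(n+1)H_n-4n$, where $H_n=\sum_{k\le n}1/k$. For $n \ge 0$ let $\hat Y_n:=(X_n-\mu_n)/(n+1)$ (so $\hat Y_0=0$). $Y$ is the distributional limit of $(X_n-\mu_n)/n$. Its law is the unique law with mean $0$ and finite variance satisfying $Y\stackrel{d}{=}UY+(1-U)Y^*+C(U)$, where $U\sim\mathrm{unif}(0,1)$, $Y^*\stackrel{d}{=}Y$, $U,Y,Y^*$ are independent, and $C(u)=2u\ln u+2(1-u)\ln(1-u)+1$. *)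

theory Defs
  imports "HOL-Probability.Probability"
begin

text \<open>Law of the number of comparisons X_n of randomized Quicksort on n distinct keys:
  X_0 = 0 and X_n = X_{U_n - 1} + X*_{n - U_n} + n - 1 with U_n uniform on {1..n},
  all independent.\<close>
function qs_comparisons :: "nat \<Rightarrow> nat pmf" where
  "qs_comparisons n =
     (if n = 0 then return_pmf 0
      else do {
        u \<leftarrow> pmf_of_set {1..n};
        a \<leftarrow> qs_comparisons (u - 1);
        b \<leftarrow> qs_comparisons (n - u);
        return_pmf (a + b + n - 1)
      })"
  by pat_completeness auto
termination
  by (relation "Wellfounded.measure id") (auto simp: set_pmf_of_set)

text \<open>mu_n = E X_n = 2(n+1)H_n - 4n.\<close>
definition qs_mean :: "nat \<Rightarrow> real" where
  "qs_mean n = 2 * (real n + 1) * harm n - 4 * real n"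

text \<open>Normalization hat Y_n = (X_n - mu_n)/(n+1), as a function of the value of X_n.\<close>
definition qs_hatY :: "nat \<Rightarrow> nat \<Rightarrow> real" where
  "qs_hatY n x = (real x - qs_mean n) / (real n + 1)"

definition qs_normalized_law :: "nat \<Rightarrow> real measure" where
  "qs_normalized_law n =
     distr (measure_pmf (qs_comparisons n)) borel (\<lambda>x. (real x - qs_mean n) / real n)"

end

theory Submission
  imports Defs
begin


declare qs_comparisons.simps[simp del]

lemma qs_simps0: "qs_comparisons 0 = return_pmf 0"
  by (simp add: qs_comparisons.simps)

lemma qs_simpsS: "n > 0 \<Longrightarrow> qs_comparisons n =
   pmf_of_set {1..n} \<bind> (\<lambda>u. qs_comparisons (u - 1) \<bind> (\<lambda>a. qs_comparisons (n - u) \<bind> (\<lambda>b. return_pmf (a + b + n - 1))))"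
  by (subst qs_comparisons.simps) simp

lemma qs_finite: "finite (set_pmf (qs_comparisons n))"
proof (induction n rule: less_induct)
  case (less n)
  show ?case
  proof (cases "n = 0")
    case True then show ?thesis by (simp add: qs_simps0)
  next
    case False
    then have "n > 0" by simp
    show ?thesis unfolding qs_simpsS[OF \<open>n > 0\<close>]
      using less False by (auto simp: set_pmf_of_set)
  qed
qed

definition QE :: "nat \<Rightarrow> (nat \<Rightarrow> real) \<Rightarrow> real" where
  "QE n f = measure_pmf.expectation (qs_comparisons n) f"

lemma E_bind:
  fixes h :: "'b \<Rightarrow> real"
  assumes "finite (set_pmf p)" "\<And>x. x \<in> set_pmf p \<Longrightarrow> finite (set_pmf (f x))"
  shows "measure_pmf.expectation (p \<bind> f) h = measure_pmf.expectation p (\<lambda>x. measure_pmf.expectation (f x) h)"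
proof -
  have "measure_pmf.expectation (p \<bind> f) h = (\<Sum>a\<in>set_pmf p. pmf p a *\<^sub>R measure_pmf.expectation (f a) h)"
    using assms by (intro pmf_expectation_bind) auto
  also have "\<dots> = measure_pmf.expectation p (\<lambda>x. measure_pmf.expectation (f x) h)"
    using assms by (subst integral_measure_pmf[of "set_pmf p"]) auto
  finally show ?thesis .
qed

lemma E_bind2:
  "measure_pmf.expectation (qs_comparisons i \<bind> (\<lambda>a. qs_comparisons j \<bind> (\<lambda>b. return_pmf (g a b)))) h
   = QE i (\<lambda>a. QE j (\<lambda>b. h (g a b)))"
proof -
  have "measure_pmf.expectation (qs_comparisons i \<bind> (\<lambda>a. qs_comparisons j \<bind> (\<lambda>b. return_pmf (g a b)))) h
     = QE i (\<lambda>a. measure_pmf.expectation (qs_comparisons j \<bind> (\<lambda>b. return_pmf (g a b))) h)"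
    unfolding QE_def by (rule E_bind) (auto simp: qs_finite)
  also have "\<dots> = QE i (\<lambda>a. QE j (\<lambda>b. h (g a b)))"
    unfolding QE_def by (intro Bochner_Integration.integral_cong refl, subst E_bind) (auto simp: qs_finite)
  finally show ?thesis .
qed

lemma QE_rec:
  assumes "n > 0"
  shows "QE n h = (\<Sum>u\<in>{1..n}. QE (u - 1) (\<lambda>a. QE (n - u) (\<lambda>b. h (a + b + n - 1)))) / real n"
proof -
  have "QE n h = measure_pmf.expectation (pmf_of_set {1..n})
     (\<lambda>u. measure_pmf.expectation (qs_comparisons (u - 1) \<bind> (\<lambda>a. qs_comparisons (n - u) \<bind> (\<lambda>b. return_pmf (a + b + n - 1)))) h)"
    unfolding QE_def qs_simpsS[OF assms] using assms qs_finite
    by (intro E_bind) (auto simp: set_pmf_of_set)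
  also have "\<dots> = measure_pmf.expectation (pmf_of_set {1..n})
     (\<lambda>u. QE (u - 1) (\<lambda>a. QE (n - u) (\<lambda>b. h (a + b + n - 1))))"
    by (simp add: E_bind2)
  also have "\<dots> = (\<Sum>u\<in>{1..n}. QE (u - 1) (\<lambda>a. QE (n - u) (\<lambda>b. h (a + b + n - 1)))) / real n"
    using assms by (subst integral_pmf_of_set) auto
  finally show ?thesis .
qed

lemma QE_0: "QE 0 h = h 0"
  by (simp add: QE_def qs_simps0)

lemma QE_integrable: "integrable (measure_pmf (qs_comparisons n)) (f :: nat \<Rightarrow> real)"
  by (rule integrable_measure_pmf_finite[OF qs_finite])

lemma QE_mono: "(\<And>x. f x \<le> g x) \<Longrightarrow> QE n f \<le> QE n g"
  unfolding QE_def by (intro integral_mono QE_integrable)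

lemma QE_add: "QE n (\<lambda>x. f x + g x) = QE n f + QE n g"
  unfolding QE_def by (intro Bochner_Integration.integral_add QE_integrable)

lemma QE_cmult: "QE n (\<lambda>x. c * f x) = c * QE n f"
  unfolding QE_def by simp

lemma QE_multc: "QE n (\<lambda>x. f x * c) = QE n f * c"
  unfolding QE_def by simp

lemma QE_const: "QE n (\<lambda>x. c) = c"
  unfolding QE_def by simp



abbreviation H :: "nat \<Rightarrow> real" where "H \<equiv> harm"

lemma mean_step: "real (Suc k) * qs_mean (Suc k) - (real k + 2) * qs_mean k = 2 * real k"
  unfolding qs_mean_def harm_Suc by (simp add: field_simps)

lemma qs_mean_0: "qs_mean 0 = 0" by (simp add: qs_mean_def harm_expand)
lemma qs_mean_1: "qs_mean 1 = 0" by (simp add: qs_mean_def harm_expand)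

definition Cc :: "nat \<Rightarrow> nat \<Rightarrow> real" where
  "Cc n u = (qs_mean (u - 1) + qs_mean (n - u) + real n - 1 - qs_mean n) / (real n + 1)"

lemma hatY_split:
  assumes "1 \<le> u" "u \<le> n"
  shows "qs_hatY n (a + b + n - 1) = real u / (real n + 1) * qs_hatY (u - 1) a
     + (real n + 1 - real u) / (real n + 1) * qs_hatY (n - u) b + Cc n u"
proof -
  have e1: "real (u - 1) + 1 = real u" using assms by (simp add: of_nat_diff)
  have e2: "real (n - u) + 1 = real n + 1 - real u" using assms by (simp add: of_nat_diff)
  have e3: "real (a + b + n - 1) = real a + real b + real n - 1" using assms by (simp add: of_nat_diff)
  have p1: "real u > 0" and p2: "real n + 1 - real u > 0" using assms by auto
  have q1: "real u / (real n + 1) * ((real a - qs_mean (u - 1)) / real u) = (real a - qs_mean (u - 1)) / (real n + 1)"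
    using p1 by simp
  have q2: "(real n + 1 - real u) / (real n + 1) * ((real b - qs_mean (n - u)) / (real n + 1 - real u))
     = (real b - qs_mean (n - u)) / (real n + 1)"
    using p2 by simp
  show ?thesis unfolding qs_hatY_def Cc_def e1 e2 e3 q1 q2
    by (simp add: add_divide_distrib[symmetric] diff_divide_distrib[symmetric])
qed

lemma Cc_comb:
  assumes "1 \<le> u" "u \<le> n"
  shows "real u / (real n + 1) * Cc (Suc n) (Suc u) + (real n + 1 - real u) / (real n + 1) * Cc (Suc n) u = Cc n u"
proof -
  obtain v where v: "u = Suc v" using assms by (cases u) auto
  obtain w where w: "n = v + 1 + w" using assms v by (metis Suc_eq_plus1 le_Suc_ex)
  note s1 = mean_step[of v]
  note s2 = mean_step[of w]
  note s3 = mean_step[of n]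
  have a1: "Suc n - Suc u = w" "Suc u - 1 = Suc v" "n - u = w" "Suc n - u = Suc w" "u - 1 = v"
    using v w by auto
  define X where "X = qs_mean (Suc v) + qs_mean w + real (Suc n) - 1 - qs_mean (Suc n)"
  define Y where "Y = qs_mean v + qs_mean (Suc w) + real (Suc n) - 1 - qs_mean (Suc n)"
  define Z where "Z = qs_mean v + qs_mean w + real n - 1 - qs_mean n"
  have key: "real u * X + (real n + 1 - real u) * Y = (real n + 2) * Z"
    using s1 s2 s3 unfolding X_def Y_def Z_def v w by (simp add: algebra_simps)
  have "real u / (real n + 1) * (X / (real (Suc n) + 1)) + (real n + 1 - real u) / (real n + 1) * (Y / (real (Suc n) + 1))
      = (real u * X + (real n + 1 - real u) * Y) / ((real n + 1) * (real n + 2))"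
    by (simp add: field_simps add_divide_distrib[symmetric])
  also have "\<dots> = Z / (real n + 1)" unfolding key by simp
  finally show ?thesis unfolding Cc_def a1 X_def[symmetric] Y_def[symmetric] Z_def[symmetric] .
qed

lemma mean_sum: "2 * (\<Sum>k<n. qs_mean k) = real n * qs_mean n - real n * (real n - 1)"
proof (induction n)
  case 0 then show ?case by (simp add: qs_mean_0)
next
  case (Suc n)
  have "2 * (\<Sum>k<Suc n. qs_mean k) = real n * qs_mean n - real n * (real n - 1) + 2 * qs_mean n"
    using Suc by simp
  also have "\<dots> = real (Suc n) * qs_mean (Suc n) - real (Suc n) * (real (Suc n) - 1)"
    using mean_step[of n] by (simp add: algebra_simps)
  finally show ?case .
qed

lemma Cc_sum:
  assumes "n > 0"
  shows "(\<Sum>u\<in>{1..n}. Cc n u) = 0"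
proof -
  have r1: "(\<Sum>u\<in>{1..n}. qs_mean (u - 1)) = (\<Sum>k<n. qs_mean k)"
    using sum.atLeast1_atMost_eq[of "\<lambda>u. qs_mean (u - 1)" n] by simp
  have r2: "(\<Sum>u\<in>{1..n}. qs_mean (n - u)) = (\<Sum>k<n. qs_mean k)"
    using sum.atLeast1_atMost_eq[of "\<lambda>u. qs_mean (n - u)" n]
      sum.nat_diff_reindex[of qs_mean n] by simp
  have "(\<Sum>u\<in>{1..n}. Cc n u) = (\<Sum>u\<in>{1..n}. qs_mean (u - 1) + qs_mean (n - u) + (real n - 1 - qs_mean n)) / (real n + 1)"
    unfolding Cc_def by (simp add: sum_divide_distrib[symmetric] algebra_simps)
  also have "\<dots> = (2 * (\<Sum>k<n. qs_mean k) + real n * (real n - 1 - qs_mean n)) / (real n + 1)"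
    by (simp only: sum.distrib r1 r2) simp
  also have "\<dots> = 0" unfolding mean_sum by (simp add: algebra_simps)
  finally show ?thesis .
qed

lemma harm_diff: "u \<le> n \<Longrightarrow> H n - H u \<le> real (n - u) / (real u + 1)"
proof (induction n rule: dec_induct)
  case base then show ?case by simp
next
  case (step n)
  have "H (Suc n) - H u = (H n - H u) + 1 / (real n + 1)" by (simp add: harm_Suc field_simps)
  also have "\<dots> \<le> real (n - u) / (real u + 1) + 1 / (real u + 1)"
    using step by (intro add_mono) (auto simp: frac_le)
  also have "\<dots> = real (Suc n - u) / (real u + 1)" using step
    by (simp add: add_divide_distrib[symmetric] Suc_diff_le)
  finally show ?case .
qed

lemma Cc_bounds:
  assumes "1 \<le> u" "u \<le> n"
  shows "-2 \<le> Cc n u" "Cc n u \<le> 1"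
proof -
  obtain v where v: "u = Suc v" using assms by (cases u) auto
  obtain w where w: "n = v + 1 + w" using assms v by (metis Suc_eq_plus1 le_Suc_ex)
  have a1: "n - u = w" "u - 1 = v" using v w by auto
  have hv: "H (Suc v) = H v + 1 / (real v + 1)" by (simp add: harm_Suc inverse_eq_divide)
  have hw: "H (Suc w) = H w + 1 / (real w + 1)" by (simp add: harm_Suc inverse_eq_divide)
  have le1: "Suc v \<le> n" "Suc w \<le> n" using w by auto
  have d1: "n - Suc v = w" "n - Suc w = v" using w by auto
  have f1: "H v + 1 / (real v + 1) \<le> H n"
    using harm_mono[OF le1(1), where 'a=real] unfolding hv .
  have f2: "H w + 1 / (real w + 1) \<le> H n"
    using harm_mono[OF le1(2), where 'a=real] unfolding hw .
  have f3: "H n - (H v + 1 / (real v + 1)) \<le> real w / (real v + 2)"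
    using harm_diff[OF le1(1)] unfolding hv d1 by (simp add: ac_simps)
  have f4: "H n - (H w + 1 / (real w + 1)) \<le> real v / (real w + 2)"
    using harm_diff[OF le1(2)] unfolding hw d1 by (simp add: ac_simps)
  have g1: "(real v + 1) * H v + 1 \<le> (real v + 1) * H n"
    using mult_left_mono[OF f1, of "real v + 1"] by (simp add: distrib_left)
  have g2: "(real w + 1) * H w + 1 \<le> (real w + 1) * H n"
    using mult_left_mono[OF f2, of "real w + 1"] by (simp add: distrib_left)
  have "(real v + 1) * (H n - (H v + 1 / (real v + 1))) \<le> (real v + 1) * (real w / (real v + 2))"
    using mult_left_mono[OF f3, of "real v + 1"] by simp
  also have "\<dots> \<le> real w" by (simp add: field_simps)
  finally have g3: "(real v + 1) * H n - (real v + 1) * H v - 1 \<le> real w" by (simp add: right_diff_distrib distrib_left)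
  have "(real w + 1) * (H n - (H w + 1 / (real w + 1))) \<le> (real w + 1) * (real v / (real w + 2))"
    using mult_left_mono[OF f4, of "real w + 1"] by simp
  also have "\<dots> \<le> real v" by (simp add: field_simps)
  finally have g4: "(real w + 1) * H n - (real w + 1) * H w - 1 \<le> real v" by (simp add: right_diff_distrib distrib_left)
  define Q where "Q = qs_mean v + qs_mean w + real n - 1 - qs_mean n"
  have Qe: "Q = 2 * ((real v + 1) * H v) + 2 * ((real w + 1) * H w) - 2 * ((real v + 1) * H n) - 2 * ((real w + 1) * H n)
     + real v + real w + 4"
    unfolding Q_def qs_mean_def w by (simp add: algebra_simps)
  have Qb: "- real n + 1 \<le> Q" "Q \<le> real n - 1" using g1 g2 g3 g4 unfolding Qe w by simp_all
  have C: "Cc n u = Q / (real n + 1)" unfolding Cc_def Q_def a1 ..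
  show "-2 \<le> Cc n u" unfolding C using Qb by (simp add: field_simps)
  show "Cc n u \<le> 1" unfolding C using Qb by (simp add: field_simps)
qed




lemma conv_aff:
  assumes "convex_on UNIV (\<phi> :: real \<Rightarrow> real)"
  shows "convex_on UNIV (\<lambda>t. \<phi> (\<beta> * t + c))"
proof (rule convex_onI)
  fix t x y :: real assume t: "0 < t" "t < 1"
  have "\<phi> (\<beta> * ((1 - t) *\<^sub>R x + t *\<^sub>R y) + c) = \<phi> ((1 - t) *\<^sub>R (\<beta> * x + c) + t *\<^sub>R (\<beta> * y + c))"
    by (simp add: algebra_simps)
  also have "\<dots> \<le> (1 - t) * \<phi> (\<beta> * x + c) + t * \<phi> (\<beta> * y + c)"
    using t by (intro convex_onD[OF assms]) auto
  finally show "\<phi> (\<beta> * ((1 - t) *\<^sub>R x + t *\<^sub>R y) + c) \<le> (1 - t) * \<phi> (\<beta> * x + c) + t * \<phi> (\<beta> * y + c)" .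
qed simp

lemma conv_QE:
  fixes F :: "nat \<Rightarrow> real \<Rightarrow> real"
  assumes "\<And>b. convex_on UNIV (\<lambda>t. F b t)"
  shows "convex_on UNIV (\<lambda>t. QE k (\<lambda>b. F b t))"
proof (rule convex_onI)
  fix t x y :: real assume t: "0 < t" "t < 1"
  have "QE k (\<lambda>b. F b ((1 - t) *\<^sub>R x + t *\<^sub>R y)) \<le> QE k (\<lambda>b. (1 - t) * F b x + t * F b y)"
    using t by (intro QE_mono convex_onD[OF assms]) auto
  also have "\<dots> = (1 - t) * QE k (\<lambda>b. F b x) + t * QE k (\<lambda>b. F b y)"
    by (simp add: QE_add QE_cmult)
  finally show "QE k (\<lambda>b. F b ((1 - t) *\<^sub>R x + t *\<^sub>R y)) \<le> (1 - t) * QE k (\<lambda>b. F b x) + t * QE k (\<lambda>b. F b y)" .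
qed simp

lemma sum_shift_ident:
  fixes G :: "nat \<Rightarrow> real"
  shows "(\<Sum>u\<in>{1..n}. real u * G (Suc u)) + (\<Sum>u\<in>{1..n}. (real n + 1 - real u) * G u)
     = real n * (\<Sum>u\<in>{1..Suc n}. G u)"
proof (induction n)
  case 0 then show ?case by simp
next
  case (Suc n)
  have "(\<Sum>u\<in>{1..Suc n}. (real (Suc n) + 1 - real u) * G u)
     = (\<Sum>u\<in>{1..Suc n}. (real n + 1 - real u) * G u + G u)"
    by (intro sum.cong refl) (simp add: algebra_simps)
  also have "\<dots> = (\<Sum>u\<in>{1..Suc n}. (real n + 1 - real u) * G u) + (\<Sum>u\<in>{1..Suc n}. G u)"
    by (simp add: sum.distrib)
  also have "(\<Sum>u\<in>{1..Suc n}. (real n + 1 - real u) * G u) = (\<Sum>u\<in>{1..n}. (real n + 1 - real u) * G u)"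
    by simp
  finally have e: "(\<Sum>u\<in>{1..Suc n}. (real (Suc n) + 1 - real u) * G u)
     = (\<Sum>u\<in>{1..n}. (real n + 1 - real u) * G u) + (\<Sum>u\<in>{1..Suc n}. G u)" .
  show ?case
    unfolding e using Suc by (simp add: algebra_simps)
qed

lemma QE_1: "QE (Suc 0) h = h 0"
  by (subst QE_rec) (auto simp: QE_0)

lemma cx_step:
  "convex_on UNIV \<phi> \<Longrightarrow> QE n (\<lambda>x. \<phi> (qs_hatY n x)) \<le> QE (Suc n) (\<lambda>x. \<phi> (qs_hatY (Suc n) x))"
proof (induction n arbitrary: \<phi> rule: less_induct)
  case (less n)
  note cvx = less.prems
  show ?case
  proof (cases "n = 0")
    case True
    then show ?thesis by (simp add: QE_0 QE_1 qs_hatY_def qs_mean_def harm_expand)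
  next
    case False
    then have n0: "n > 0" by simp
    define G where "G u' = QE (u' - 1) (\<lambda>a. QE (Suc n - u') (\<lambda>b. \<phi> (qs_hatY (Suc n) (a + b + Suc n - 1))))" for u'
    define Hh where "Hh u = QE (u - 1) (\<lambda>a. QE (n - u) (\<lambda>b. \<phi> (qs_hatY n (a + b + n - 1))))" for u
    have LHS: "QE n (\<lambda>x. \<phi> (qs_hatY n x)) = (\<Sum>u\<in>{1..n}. Hh u) / real n"
      unfolding Hh_def by (rule QE_rec[OF n0])
    have RHS: "QE (Suc n) (\<lambda>x. \<phi> (qs_hatY (Suc n) x)) = (\<Sum>u\<in>{1..Suc n}. G u) / (real n + 1)"
      unfolding G_def by (subst QE_rec) auto
    have pw: "real u * G (Suc u) + (real n + 1 - real u) * G u \<ge> (real n + 1) * Hh u"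
      if u: "1 \<le> u" "u \<le> n" for u
    proof -
      define a1 where "a1 = real (Suc u) / (real (Suc n) + 1)"
      define b1 where "b1 = (real (Suc n) + 1 - real (Suc u)) / (real (Suc n) + 1)"
      define c1 where "c1 = Cc (Suc n) (Suc u)"
      define a2 where "a2 = real u / (real (Suc n) + 1)"
      define b2 where "b2 = (real (Suc n) + 1 - real u) / (real (Suc n) + 1)"
      define c2 where "c2 = Cc (Suc n) u"
      define p where "p = real u / (real n + 1)"
      define Z1 where "Z1 a b = a1 * qs_hatY (u - 1) a + b1 * qs_hatY (n - u) b + c1" for a b
      define Z2 where "Z2 a b = a2 * qs_hatY (u - 1) a + b2 * qs_hatY (n - u) b + c2" for a b
      have p01: "0 \<le> p" "p \<le> 1" using u unfolding p_def by auto
      have G1: "G (Suc u) = QE u (\<lambda>a. QE (n - u) (\<lambda>b. \<phi> (a1 * qs_hatY u a + b1 * qs_hatY (n - u) b + c1)))"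
        unfolding G_def a1_def b1_def c1_def
        using hatY_split[of "Suc u" "Suc n"] u by simp
      have cv1: "convex_on UNIV (\<lambda>t. QE (n - u) (\<lambda>b. \<phi> (a1 * t + (b1 * qs_hatY (n - u) b + c1))))"
        by (intro conv_QE conv_aff cvx)
      have A1: "QE (u - 1) (\<lambda>a. QE (n - u) (\<lambda>b. \<phi> (Z1 a b))) \<le> G (Suc u)"
      proof -
        have "QE (u - 1) (\<lambda>a. QE (n - u) (\<lambda>b. \<phi> (Z1 a b)))
           = QE (u - 1) (\<lambda>a. (\<lambda>t. QE (n - u) (\<lambda>b. \<phi> (a1 * t + (b1 * qs_hatY (n - u) b + c1)))) (qs_hatY (u - 1) a))"
          unfolding Z1_def by (simp add: add.assoc)
        also have "\<dots> \<le> QE (Suc (u - 1)) (\<lambda>a. (\<lambda>t. QE (n - u) (\<lambda>b. \<phi> (a1 * t + (b1 * qs_hatY (n - u) b + c1)))) (qs_hatY (Suc (u - 1)) a))"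
          using u by (intro less.IH cv1) auto
        also have "\<dots> = G (Suc u)" unfolding G1 using u by (simp add: add.assoc)
        finally show ?thesis .
      qed
      have G2: "G u = QE (u - 1) (\<lambda>a. QE (Suc (n - u)) (\<lambda>b. \<phi> (a2 * qs_hatY (u - 1) a + b2 * qs_hatY (Suc (n - u)) b + c2)))"
        unfolding G_def a2_def b2_def c2_def
        using hatY_split[of u "Suc n"] u by (simp add: Suc_diff_le)
      have A2: "QE (u - 1) (\<lambda>a. QE (n - u) (\<lambda>b. \<phi> (Z2 a b))) \<le> G u"
        unfolding G2 Z2_def
      proof (intro QE_mono)
        fix a
        have cv2: "convex_on UNIV (\<lambda>t. \<phi> (b2 * t + (a2 * qs_hatY (u - 1) a + c2)))"
          by (intro conv_aff cvx)
        have "QE (n - u) (\<lambda>b. (\<lambda>t. \<phi> (b2 * t + (a2 * qs_hatY (u - 1) a + c2))) (qs_hatY (n - u) b))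
           \<le> QE (Suc (n - u)) (\<lambda>b. (\<lambda>t. \<phi> (b2 * t + (a2 * qs_hatY (u - 1) a + c2))) (qs_hatY (Suc (n - u)) b))"
          using u by (intro less.IH cv2) auto
        then show "QE (n - u) (\<lambda>b. \<phi> (a2 * qs_hatY (u - 1) a + b2 * qs_hatY (n - u) b + c2))
           \<le> QE (Suc (n - u)) (\<lambda>b. \<phi> (a2 * qs_hatY (u - 1) a + b2 * qs_hatY (Suc (n - u)) b + c2))"
          by (simp add: algebra_simps)
      qed
      have comb: "p * Z1 a b + (1 - p) * Z2 a b = qs_hatY n (a + b + n - 1)" for a b
      proof -
        have ca: "p * a1 + (1 - p) * a2 = real u / (real n + 1)"
          unfolding p_def a1_def a2_def by (simp add: divide_simps) (simp add: algebra_simps)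
        have cb: "p * b1 + (1 - p) * b2 = (real n + 1 - real u) / (real n + 1)"
          unfolding p_def b1_def b2_def by (simp add: divide_simps) (simp add: algebra_simps)
        have cc: "p * c1 + (1 - p) * c2 = Cc n u"
          unfolding p_def c1_def c2_def using Cc_comb[OF u] by (simp add: field_simps)
        have "p * Z1 a b + (1 - p) * Z2 a b = (p * a1 + (1 - p) * a2) * qs_hatY (u - 1) a
            + (p * b1 + (1 - p) * b2) * qs_hatY (n - u) b + (p * c1 + (1 - p) * c2)"
          unfolding Z1_def Z2_def by (simp add: algebra_simps)
        also have "\<dots> = qs_hatY n (a + b + n - 1)"
          unfolding ca cb cc using hatY_split[OF u] by simp
        finally show ?thesis .
      qed
      have "Hh u \<le> QE (u - 1) (\<lambda>a. QE (n - u) (\<lambda>b. p * \<phi> (Z1 a b) + (1 - p) * \<phi> (Z2 a b)))"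
        unfolding Hh_def
      proof (intro QE_mono)
        fix a b
        have "\<phi> (qs_hatY n (a + b + n - 1)) = \<phi> ((1 - p) *\<^sub>R Z2 a b + p *\<^sub>R Z1 a b)"
          using comb[of a b] by (simp add: algebra_simps)
        also have "\<dots> \<le> (1 - p) * \<phi> (Z2 a b) + p * \<phi> (Z1 a b)"
          using p01 by (intro convex_onD[OF cvx]) auto
        finally show "\<phi> (qs_hatY n (a + b + n - 1)) \<le> p * \<phi> (Z1 a b) + (1 - p) * \<phi> (Z2 a b)" by simp
      qed
      also have "\<dots> = p * QE (u - 1) (\<lambda>a. QE (n - u) (\<lambda>b. \<phi> (Z1 a b)))
                    + (1 - p) * QE (u - 1) (\<lambda>a. QE (n - u) (\<lambda>b. \<phi> (Z2 a b)))"
        by (simp add: QE_add QE_cmult)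
      also have "\<dots> \<le> p * G (Suc u) + (1 - p) * G u"
        using p01 A1 A2 by (intro add_mono mult_left_mono) auto
      finally have "Hh u \<le> p * G (Suc u) + (1 - p) * G u" .
      then have "(real n + 1) * Hh u \<le> (real n + 1) * (p * G (Suc u) + (1 - p) * G u)"
        by (intro mult_left_mono) auto
      also have "\<dots> = real u * G (Suc u) + (real n + 1 - real u) * G u"
        unfolding p_def by (simp add: divide_simps)
      finally show ?thesis .
    qed
    have "(real n + 1) * (\<Sum>u\<in>{1..n}. Hh u) \<le> (\<Sum>u\<in>{1..n}. real u * G (Suc u) + (real n + 1 - real u) * G u)"
      unfolding sum_distrib_left using pw by (intro sum_mono) auto
    also have "\<dots> = real n * (\<Sum>u\<in>{1..Suc n}. G u)"
      using sum_shift_ident[of G n] by (simp add: sum.distrib)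
    finally have "(real n + 1) * (\<Sum>u\<in>{1..n}. Hh u) \<le> real n * (\<Sum>u\<in>{1..Suc n}. G u)" .
    then show ?thesis unfolding LHS RHS using n0 by (simp add: field_simps)
  qed
qed




definition mg :: "nat \<Rightarrow> real \<Rightarrow> real" where
  "mg n l = QE n (\<lambda>x. exp (l * qs_hatY n x))"

lemma conv_lin: "convex_on UNIV (\<lambda>t::real. c * t)"
  by (rule convex_onI) (auto simp: algebra_simps)

lemma QE_minus: "QE n (\<lambda>x. - f x) = - QE n f"
  using QE_cmult[of n "-1" f] by simp

lemma hat_mean_zero: "QE n (qs_hatY n) = 0"
proof (induction n)
  case 0 then show ?case by (simp add: QE_0 qs_hatY_def qs_mean_0)
next
  case (Suc n)
  have "QE n (\<lambda>x. 1 * qs_hatY n x) \<le> QE (Suc n) (\<lambda>x. 1 * qs_hatY (Suc n) x)"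
    by (rule cx_step[OF conv_lin])
  moreover have "QE n (\<lambda>x. (-1) * qs_hatY n x) \<le> QE (Suc n) (\<lambda>x. (-1) * qs_hatY (Suc n) x)"
    by (rule cx_step[OF conv_lin])
  ultimately show ?case using Suc by (simp add: QE_minus)
qed

lemma mg_ge1: "mg n l \<ge> 1"
proof -
  have "QE n (\<lambda>x. 1 + l * qs_hatY n x) \<le> mg n l"
    unfolding mg_def by (intro QE_mono) (rule exp_ge_add_one_self)
  moreover have "QE n (\<lambda>x. 1 + l * qs_hatY n x) = 1"
    by (simp add: QE_add QE_cmult QE_const hat_mean_zero)
  ultimately show ?thesis by simp
qed

lemma mg_pos: "mg n l > 0" using mg_ge1[of n l] by simp

lemma mg_0: "mg 0 l = 1" by (simp add: mg_def QE_0 qs_hatY_def qs_mean_0)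

lemma mg_mono_n: "mg n l \<le> mg (Suc n) l"
  unfolding mg_def by (rule cx_step[OF conv_aff[OF exp_convex, of l 0, simplified]])

lemma mg_rec:
  assumes "n > 0"
  shows "mg n l = (\<Sum>u\<in>{1..n}. mg (u - 1) (l * (real u / (real n + 1)))
      * mg (n - u) (l * ((real n + 1 - real u) / (real n + 1))) * exp (l * Cc n u)) / real n"
proof -
  have "mg n l = (\<Sum>u\<in>{1..n}. QE (u - 1) (\<lambda>a. QE (n - u) (\<lambda>b. exp (l * qs_hatY n (a + b + n - 1))))) / real n"
    unfolding mg_def by (rule QE_rec[OF assms])
  also have "\<dots> = (\<Sum>u\<in>{1..n}. mg (u - 1) (l * (real u / (real n + 1)))
      * mg (n - u) (l * ((real n + 1 - real u) / (real n + 1))) * exp (l * Cc n u)) / real n"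
  proof (intro arg_cong[where f="\<lambda>x. x / real n"] sum.cong refl)
    fix u assume u: "u \<in> {1..n}"
    define \<alpha> where "\<alpha> = l * (real u / (real n + 1))"
    define \<beta> where "\<beta> = l * ((real n + 1 - real u) / (real n + 1))"
    have "QE (u - 1) (\<lambda>a. QE (n - u) (\<lambda>b. exp (l * qs_hatY n (a + b + n - 1))))
        = QE (u - 1) (\<lambda>a. QE (n - u) (\<lambda>b. (exp (\<alpha> * qs_hatY (u - 1) a) * exp (l * Cc n u)) * exp (\<beta> * qs_hatY (n - u) b)))"
      using u hatY_split[of u n] unfolding \<alpha>_def \<beta>_def
      by (simp add: distrib_left exp_add[symmetric] algebra_simps)
    also have "\<dots> = QE (u - 1) (\<lambda>a. exp (\<alpha> * qs_hatY (u - 1) a) * (exp (l * Cc n u) * mg (n - u) \<beta>))"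
      unfolding QE_cmult mg_def by (simp add: mult.assoc)
    also have "\<dots> = mg (u - 1) \<alpha> * mg (n - u) \<beta> * exp (l * Cc n u)"
      unfolding QE_multc mg_def by (simp add: mult_ac)
    finally show "QE (u - 1) (\<lambda>a. QE (n - u) (\<lambda>b. exp (l * qs_hatY n (a + b + n - 1))))
       = mg (u - 1) (l * (real u / (real n + 1))) * mg (n - u) (l * ((real n + 1 - real u) / (real n + 1))) * exp (l * Cc n u)"
      unfolding \<alpha>_def \<beta>_def .
  qed
  finally show ?thesis .
qed

lemma mg_holder:
  assumes "0 < \<theta>" "\<theta> \<le> 1"
  shows "mg n (\<theta> * l) \<le> mg n l powr \<theta>"
proof -
  define c where "c = mg n l"
  have c: "c > 0" unfolding c_def by (rule mg_pos)
  have pw: "exp (\<theta> * l * qs_hatY n x) \<le> (\<theta> * exp (l * qs_hatY n x) + (1 - \<theta>) * c) / c powr (1 - \<theta>)" for x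
  proof -
    have "exp (l * qs_hatY n x) powr \<theta> * c powr (1 - \<theta>) \<le> \<theta> * exp (l * qs_hatY n x) + (1 - \<theta>) * c"
      using assms c by (intro Youngs_inequality_0) auto
    moreover have "exp (l * qs_hatY n x) powr \<theta> = exp (\<theta> * l * qs_hatY n x)"
      by (simp add: exp_powr_real algebra_simps)
    ultimately show ?thesis using c by (simp add: field_simps)
  qed
  have "mg n (\<theta> * l) \<le> QE n (\<lambda>x. (\<theta> * exp (l * qs_hatY n x) + (1 - \<theta>) * c) / c powr (1 - \<theta>))"
    unfolding mg_def by (intro QE_mono) (simp add: pw mult.assoc[symmetric])
  also have "\<dots> = (\<theta> * c + (1 - \<theta>) * c) / c powr (1 - \<theta>)"
    unfolding c_def mg_def by (simp add: QE_add QE_cmult QE_const divide_inverse QE_multc)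
  also have "\<dots> = c powr \<theta>"
    using c by (simp add: powr_diff field_simps)
  finally show ?thesis unfolding c_def .
qed




lemma sum_id_real: "(\<Sum>u\<in>{1..n}. real u) = real n * (real n + 1) / 2"
  by (induction n) (auto simp: field_simps)

lemma sum_ab_real: "(\<Sum>u\<in>{1..n}. real u * (real n + 1 - real u)) = real n * (real n + 1) * (real n + 2) / 6"
proof (induction n)
  case 0 then show ?case by simp
next
  case (Suc n)
  have "(\<Sum>u\<in>{1..Suc n}. real u * (real (Suc n) + 1 - real u))
      = (\<Sum>u\<in>{1..Suc n}. real u * (real n + 1 - real u)) + (\<Sum>u\<in>{1..Suc n}. real u)"
    by (simp add: sum.distrib[symmetric] algebra_simps)
  also have "(\<Sum>u\<in>{1..Suc n}. real u * (real n + 1 - real u)) = (\<Sum>u\<in>{1..n}. real u * (real n + 1 - real u))"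
    by simp
  finally show ?case unfolding Suc sum_id_real by (simp add: field_simps)
qed

lemma exp_quad:
  assumes x1: "(x::real) \<le> 1" shows "exp x \<le> 1 + x + x\<^sup>2"
proof (cases "x \<ge> 0")
  case True
  then show ?thesis using exp_bound[of x] x1 by simp
next
  case False
  then have x: "x < 0" by simp
  have "1 - x \<le> exp (- x)" using exp_ge_add_one_self[of "-x"] by simp
  then have "exp x \<le> 1 / (1 - x)" using x by (simp add: exp_minus field_simps)
  also have "\<dots> \<le> 1 + x + x\<^sup>2"
  proof -
    have c: "x * (x * x) \<le> 0" using x by (intro mult_nonpos_nonneg) auto
    have "(1 + x + x\<^sup>2) * (1 - x) = 1 - x * (x * x)" by (simp add: algebra_simps power2_eq_square)
    then have "1 \<le> (1 + x + x\<^sup>2) * (1 - x)" using c by simp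
    then show ?thesis using x by (simp add: field_simps)
  qed
  finally show ?thesis .
qed

lemma key_ineq:
  fixes a b l C :: real
  assumes ab: "0 \<le> a" "0 \<le> b" "a + b = 1" and C: "\<bar>C\<bar> \<le> 2" and l: "\<bar>l\<bar> \<le> 1/16"
  shows "exp (64 * (l * a)\<^sup>2) * exp (64 * (l * b)\<^sup>2) * exp (l * C)
      \<le> exp (64 * l\<^sup>2) * (1 + l * C + 8 * l\<^sup>2 - 96 * l\<^sup>2 * (a * b))"
proof -
  define x where "x = l * C - 128 * l\<^sup>2 * (a * b)"
  have b': "b = 1 - a" using ab by simp
  have sq: "(l * a)\<^sup>2 + (l * b)\<^sup>2 = l\<^sup>2 - 2 * l\<^sup>2 * (a * b)"
    unfolding b' by (simp add: algebra_simps power2_eq_square)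
  have s2: "64 * (l * a)\<^sup>2 + 64 * (l * b)\<^sup>2 + l * C = 64 * l\<^sup>2 + x"
  proof -
    have "64 * (l * a)\<^sup>2 + 64 * (l * b)\<^sup>2 = 64 * ((l * a)\<^sup>2 + (l * b)\<^sup>2)" by simp
    also have "\<dots> = 64 * (l\<^sup>2 - 2 * l\<^sup>2 * (a * b))" by (simp only: sq)
    finally show ?thesis unfolding x_def by simp
  qed
  have e: "exp (64 * (l * a)\<^sup>2) * exp (64 * (l * b)\<^sup>2) * exp (l * C) = exp (64 * l\<^sup>2) * exp x"
    by (simp only: exp_add[symmetric] s2)
  have abq: "a * b \<le> 1/4"
  proof -
    have "a * b = 1/4 - (a - 1/2)\<^sup>2" unfolding b' by (simp add: power2_eq_square algebra_simps)
    moreover have "0 \<le> (a - 1/2)\<^sup>2" by simp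
    ultimately show ?thesis by linarith
  qed
  have ab0: "0 \<le> a * b" using ab by simp
  have l2: "l\<^sup>2 \<le> 1/256"
  proof -
    have "l\<^sup>2 = \<bar>l\<bar>\<^sup>2" by simp
    also have "\<dots> \<le> (1/16)\<^sup>2" using l by (intro power_mono) auto
    finally show ?thesis by (simp add: power2_eq_square)
  qed
  have lC: "l * C \<le> 1/8" "(l * C)\<^sup>2 \<le> 4 * l\<^sup>2"
  proof -
    have "\<bar>l * C\<bar> \<le> 1/16 * 2" unfolding abs_mult using l C by (intro mult_mono) auto
    then show "l * C \<le> 1/8" by simp
    have "(l * C)\<^sup>2 = l\<^sup>2 * C\<^sup>2" by (simp add: power_mult_distrib)
    also have "\<dots> \<le> l\<^sup>2 * 4"
    proof (intro mult_left_mono)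
      have "C\<^sup>2 = \<bar>C\<bar>\<^sup>2" by simp
      also have "\<dots> \<le> 2\<^sup>2" using C by (intro power_mono) auto
      finally show "C\<^sup>2 \<le> 4" by simp
    qed simp
    finally show "(l * C)\<^sup>2 \<le> 4 * l\<^sup>2" by simp
  qed
  define Q where "Q = 128 * l\<^sup>2 * (a * b)"
  have Q0: "0 \<le> Q" unfolding Q_def using ab0 by simp
  have Q8: "Q \<le> 1/8"
  proof -
    have "Q \<le> 128 * (1/256) * (1/4)" unfolding Q_def using l2 abq ab0
      by (intro mult_mono) auto
    then show ?thesis by simp
  qed
  have QQ: "Q\<^sup>2 \<le> Q / 8"
    using mult_left_mono[OF Q8 Q0] by (simp add: power2_eq_square)
  have x2: "x\<^sup>2 \<le> 8 * l\<^sup>2 + 32 * l\<^sup>2 * (a * b)"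
  proof -
    have "x\<^sup>2 \<le> 2 * (l * C)\<^sup>2 + 2 * Q\<^sup>2"
    proof -
      have "2 * (l * C)\<^sup>2 + 2 * Q\<^sup>2 - (l * C - Q)\<^sup>2 = (l * C + Q)\<^sup>2"
        by (simp add: power2_eq_square algebra_simps)
      moreover have "0 \<le> (l * C + Q)\<^sup>2" by simp
      ultimately show ?thesis unfolding x_def Q_def[symmetric] by linarith
    qed
    also have "\<dots> \<le> 2 * (4 * l\<^sup>2) + 2 * (Q / 8)" using lC QQ by simp
    finally show ?thesis unfolding Q_def by (simp add: mult_ac)
  qed
  have "exp x \<le> 1 + x + x\<^sup>2" by (rule exp_quad) (use lC Q0 in \<open>simp add: x_def Q_def[symmetric]\<close>)
  also have "\<dots> \<le> 1 + l * C + 8 * l\<^sup>2 - 96 * l\<^sup>2 * (a * b)"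
  proof -
    have "1 + x + x\<^sup>2 \<le> 1 + x + (8 * l\<^sup>2 + 32 * l\<^sup>2 * (a * b))" using x2 by simp
    moreover have "1 + x + (8 * l\<^sup>2 + 32 * l\<^sup>2 * (a * b)) = 1 + l * C + 8 * l\<^sup>2 - 96 * l\<^sup>2 * (a * b)"
      unfolding x_def by (simp add: algebra_simps)
    ultimately show ?thesis by linarith
  qed
  finally have "exp x \<le> 1 + l * C + 8 * l\<^sup>2 - 96 * l\<^sup>2 * (a * b)" .
  then show ?thesis unfolding e by (intro mult_left_mono) auto
qed

lemma mg_base: "\<bar>l\<bar> \<le> 1/16 \<Longrightarrow> mg n l \<le> exp (64 * l\<^sup>2)"
proof (induction n arbitrary: l rule: less_induct)
  case (less n)
  show ?case
  proof (cases "n = 0")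
    case True then show ?thesis by (simp add: mg_0)
  next
    case False
    then have n0: "n > 0" by simp
    define a where "a u = real u / (real n + 1)" for u
    define b where "b u = (real n + 1 - real u) / (real n + 1)" for u
    have pw: "mg (u - 1) (l * a u) * mg (n - u) (l * b u) * exp (l * Cc n u)
        \<le> exp (64 * l\<^sup>2) * (1 + l * Cc n u + 8 * l\<^sup>2 - 96 * l\<^sup>2 * (a u * b u))" if u: "u \<in> {1..n}" for u
    proof -
      have np: "real n + 1 > 0" by simp
      have a01: "0 \<le> a u" "a u \<le> 1" "0 \<le> b u" "a u + b u = 1" using u np
        by (auto simp: a_def b_def divide_simps)
      have bu1: "b u \<le> 1" using a01 by linarith
      have "\<bar>l * a u\<bar> \<le> \<bar>l\<bar>" using a01 by (simp add: abs_mult mult_left_le)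
      moreover have "\<bar>l * b u\<bar> \<le> \<bar>l\<bar>" using a01 bu1 by (simp add: abs_mult mult_left_le)
      ultimately have la: "\<bar>l * a u\<bar> \<le> 1/16" "\<bar>l * b u\<bar> \<le> 1/16" using less.prems by linarith+
      have i1: "mg (u - 1) (l * a u) \<le> exp (64 * (l * a u)\<^sup>2)" using u la by (intro less.IH) auto
      have i2: "mg (n - u) (l * b u) \<le> exp (64 * (l * b u)\<^sup>2)" using u la by (intro less.IH) auto
      have "mg (u - 1) (l * a u) * mg (n - u) (l * b u) * exp (l * Cc n u)
          \<le> exp (64 * (l * a u)\<^sup>2) * exp (64 * (l * b u)\<^sup>2) * exp (l * Cc n u)"
        using i1 i2 mg_pos by (intro mult_right_mono mult_mono) (auto intro: less_imp_le)
      also have "\<dots> \<le> exp (64 * l\<^sup>2) * (1 + l * Cc n u + 8 * l\<^sup>2 - 96 * l\<^sup>2 * (a u * b u))"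
        using a01 Cc_bounds[of u n] u less.prems by (intro key_ineq) auto
      finally show ?thesis .
    qed
    have "mg n l = (\<Sum>u\<in>{1..n}. mg (u - 1) (l * a u) * mg (n - u) (l * b u) * exp (l * Cc n u)) / real n"
      unfolding a_def b_def by (rule mg_rec[OF n0])
    also have "\<dots> \<le> (\<Sum>u\<in>{1..n}. exp (64 * l\<^sup>2) * (1 + l * Cc n u + 8 * l\<^sup>2 - 96 * l\<^sup>2 * (a u * b u))) / real n"
      using pw by (intro divide_right_mono sum_mono) auto
    also have "(\<Sum>u\<in>{1..n}. exp (64 * l\<^sup>2) * (1 + l * Cc n u + 8 * l\<^sup>2 - 96 * l\<^sup>2 * (a u * b u)))
        = exp (64 * l\<^sup>2) * (real n + l * (\<Sum>u\<in>{1..n}. Cc n u) + 8 * l\<^sup>2 * real n - 96 * l\<^sup>2 * (\<Sum>u\<in>{1..n}. a u * b u))"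
    proof -
      have "(\<Sum>u\<in>{1..n}. 1 + l * Cc n u + 8 * l\<^sup>2 - 96 * l\<^sup>2 * (a u * b u))
          = (\<Sum>u\<in>{1..n}. 1::real) + (\<Sum>u\<in>{1..n}. l * Cc n u) + (\<Sum>u\<in>{1..n}. 8 * l\<^sup>2)
             - (\<Sum>u\<in>{1..n}. 96 * l\<^sup>2 * (a u * b u))"
        by (simp only: sum.distrib sum_subtractf)
      also have "\<dots> = real n + l * (\<Sum>u\<in>{1..n}. Cc n u) + 8 * l\<^sup>2 * real n - 96 * l\<^sup>2 * (\<Sum>u\<in>{1..n}. a u * b u)"
        by (simp add: sum_distrib_left[symmetric])
      finally show ?thesis by (simp add: sum_distrib_left[symmetric])
    qed
    also have "(\<Sum>u\<in>{1..n}. a u * b u) = (\<Sum>u\<in>{1..n}. real u * (real n + 1 - real u)) / (real n + 1)\<^sup>2"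
      unfolding a_def b_def by (simp add: sum_divide_distrib power2_eq_square)
    also have "\<dots> = real n * (real n + 2) / (6 * (real n + 1))"
      unfolding sum_ab_real
    proof -
      have np: "real n + 1 \<noteq> 0" by simp
      have "real n * (real n + 1) * (real n + 2) / 6 / (real n + 1)\<^sup>2 = (real n * (real n + 2) / 6) * ((real n + 1) / ((real n + 1) * (real n + 1)))"
        by (simp add: power2_eq_square)
      also have "(real n + 1) / ((real n + 1) * (real n + 1)) = 1 / (real n + 1)" using np by simp
      finally show "real n * (real n + 1) * (real n + 2) / 6 / (real n + 1)\<^sup>2 = real n * (real n + 2) / (6 * (real n + 1))" by simp
    qed
    finally have "mg n l \<le> exp (64 * l\<^sup>2) * (real n + 8 * l\<^sup>2 * real n - 96 * l\<^sup>2 * (real n * (real n + 2) / (6 * (real n + 1)))) / real n"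
      unfolding Cc_sum[OF n0] by simp
    also have "\<dots> \<le> exp (64 * l\<^sup>2) * real n / real n"
    proof (intro divide_right_mono mult_left_mono)
      define DD where "DD = real n * (real n + 2) / (6 * (real n + 1))"
      have "real n / 12 \<le> DD" unfolding DD_def by (simp add: field_simps)
      then have "96 * l\<^sup>2 * (real n / 12) \<le> 96 * l\<^sup>2 * DD"
        by (intro mult_left_mono) auto
      then have "8 * l\<^sup>2 * real n \<le> 96 * l\<^sup>2 * (real n * (real n + 2) / (6 * (real n + 1)))"
        unfolding DD_def by (simp add: mult_ac)
      then show "real n + 8 * l\<^sup>2 * real n - 96 * l\<^sup>2 * (real n * (real n + 2) / (6 * (real n + 1))) \<le> real n"
        by simp
    qed auto
    also have "\<dots> = exp (64 * l\<^sup>2)" using n0 by simp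
    finally show ?thesis .
  qed
qed




lemma geom_bound:
  assumes s: "s > 0" and n: "n > 0"
  shows "(\<Sum>u\<in>{1..n}. exp (s * (real u / (real n + 1)))) \<le> (real n + 1) * exp s / s"
proof -
  define q where "q = exp (s / (real n + 1))"
  have q1: "q - 1 \<ge> s / (real n + 1)" unfolding q_def using exp_ge_add_one_self[of "s / (real n + 1)"] by linarith
  have qpos: "q - 1 > 0" using q1 s by (smt (verit) divide_pos_pos of_nat_less_0_iff)
  have eq: "exp (s * (real u / (real n + 1))) = q ^ u" for u
    unfolding q_def exp_of_nat_mult[symmetric] by (simp add: field_simps)
  have "(\<Sum>u\<in>{1..n}. exp (s * (real u / (real n + 1)))) = (\<Sum>u\<in>{1..n}. q ^ u)" by (intro sum.cong refl eq)
  also have "\<dots> \<le> (\<Sum>u<Suc n. q ^ u)"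
    by (intro sum_mono2) (auto simp: q_def)
  also have "\<dots> = (q ^ Suc n - 1) / (q - 1)" using qpos by (intro geometric_sum) auto
  also have "\<dots> \<le> q ^ Suc n / (q - 1)" using qpos by (intro divide_right_mono) auto
  also have "q ^ Suc n = exp s"
    unfolding q_def exp_of_nat_mult[symmetric] by (simp add: field_simps)
  also have "exp s / (q - 1) \<le> exp s / (s / (real n + 1))"
    using q1 qpos s by (intro divide_left_mono) auto
  also have "\<dots> = (real n + 1) * exp s / s" by simp
  finally show ?thesis .
qed

lemma sum_reflect:
  fixes f :: "real \<Rightarrow> real"
  shows "(\<Sum>u\<in>{1..n}. f (real n + 1 - real u)) = (\<Sum>u\<in>{1..n}. f (real u))"
  by (rule sum.reindex_bij_witness[of _ "\<lambda>u. n + 1 - u" "\<lambda>u. n + 1 - u"]) (auto simp: of_nat_diff algebra_simps)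

lemma mg_double:
  assumes B1: "1 \<le> B" and r: "0 \<le> r" and hyp: "\<And>n l. \<bar>l\<bar> \<le> r \<Longrightarrow> mg n l \<le> B"
    and l: "\<bar>l\<bar> \<le> 2 * r"
  shows "mg n l \<le> exp (4 * B * exp (4 * r))"
proof (induction n rule: less_induct)
  case (less n)
  define s where "s = 4 * B * exp (4 * r)"
  have s0: "s > 0" unfolding s_def using B1 by simp
  show ?case
  proof (cases "n = 0")
    case True then show ?thesis using s0 by (simp add: mg_0 s_def[symmetric])
  next
    case False
    then have n0: "n > 0" by simp
    define a where "a u = real u / (real n + 1)" for u
    define b where "b u = (real n + 1 - real u) / (real n + 1)" for u
    have pw: "mg (u - 1) (l * a u) * mg (n - u) (l * b u) * exp (l * Cc n u)
        \<le> B * exp (4 * r) * (exp (s * a u) + exp (s * b u))" if u: "u \<in> {1..n}" for u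
    proof -
      have np: "real n + 1 > 0" by simp
      have a01: "0 < a u" "a u \<le> 1" "0 < b u" "b u \<le> 1" "a u + b u = 1" using u np
        by (auto simp: a_def b_def divide_simps)
      have eC: "exp (l * Cc n u) \<le> exp (4 * r)"
      proof -
        have "l * Cc n u \<le> \<bar>l\<bar> * \<bar>Cc n u\<bar>" by (simp add: abs_mult[symmetric])
        also have "\<dots> \<le> (2 * r) * 2" using l Cc_bounds[of u n] u by (intro mult_mono) auto
        finally show ?thesis by simp
      qed
      have prod: "mg (u - 1) (l * a u) * mg (n - u) (l * b u) \<le> B * (exp (s * a u) + exp (s * b u))"
      proof (cases "a u \<le> 1/2")
        case True
        have "\<bar>l * a u\<bar> \<le> 2 * r * (1/2)" unfolding abs_mult using l True a01 by (intro mult_mono) auto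
        then have m1: "mg (u - 1) (l * a u) \<le> B" by (intro hyp) simp
        have "mg (n - u) (l * b u) = mg (n - u) (b u * l)" by (simp add: mult.commute)
        also have "\<dots> \<le> mg (n - u) l powr b u" using a01 by (intro mg_holder) auto
        also have "\<dots> \<le> exp s powr b u"
          using less.IH[of "n - u"] u a01 mg_pos[of "n - u" l] unfolding s_def
          by (intro powr_mono2) auto
        also have "\<dots> = exp (s * b u)" by (simp add: exp_powr_real)
        finally have m2: "mg (n - u) (l * b u) \<le> exp (s * b u)" .
        have "mg (u - 1) (l * a u) * mg (n - u) (l * b u) \<le> B * exp (s * b u)"
          using m1 m2 mg_pos B1 by (intro mult_mono) (auto intro: less_imp_le)
        also have "\<dots> \<le> B * (exp (s * a u) + exp (s * b u))" using B1 by simp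
        finally show ?thesis .
      next
        case False
        then have bh: "b u \<le> 1/2" using a01 by simp
        have "\<bar>l * b u\<bar> \<le> 2 * r * (1/2)" unfolding abs_mult using l bh a01 by (intro mult_mono) auto
        then have m2: "mg (n - u) (l * b u) \<le> B" by (intro hyp) simp
        have "mg (u - 1) (l * a u) = mg (u - 1) (a u * l)" by (simp add: mult.commute)
        also have "\<dots> \<le> mg (u - 1) l powr a u" using a01 by (intro mg_holder) auto
        also have "\<dots> \<le> exp s powr a u"
          using less.IH[of "u - 1"] u a01 mg_pos[of "u - 1" l] unfolding s_def
          by (intro powr_mono2) auto
        also have "\<dots> = exp (s * a u)" by (simp add: exp_powr_real)
        finally have m1: "mg (u - 1) (l * a u) \<le> exp (s * a u)" .
        have "mg (u - 1) (l * a u) * mg (n - u) (l * b u) \<le> exp (s * a u) * B"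
          using m1 m2 mg_pos by (intro mult_mono) (auto intro: less_imp_le)
        also have "\<dots> \<le> B * (exp (s * a u) + exp (s * b u))" using B1 by (simp add: mult.commute)
        finally show ?thesis .
      qed
      have "mg (u - 1) (l * a u) * mg (n - u) (l * b u) * exp (l * Cc n u)
          \<le> B * (exp (s * a u) + exp (s * b u)) * exp (4 * r)"
        using mult_mono[OF prod eC] B1 by simp
      then show ?thesis by (simp add: mult_ac)
    qed
    have "mg n l = (\<Sum>u\<in>{1..n}. mg (u - 1) (l * a u) * mg (n - u) (l * b u) * exp (l * Cc n u)) / real n"
      unfolding a_def b_def by (rule mg_rec[OF n0])
    also have "\<dots> \<le> (\<Sum>u\<in>{1..n}. B * exp (4 * r) * (exp (s * a u) + exp (s * b u))) / real n"
      using pw by (intro divide_right_mono sum_mono) auto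
    also have "(\<Sum>u\<in>{1..n}. B * exp (4 * r) * (exp (s * a u) + exp (s * b u)))
        = B * exp (4 * r) * (2 * (\<Sum>u\<in>{1..n}. exp (s * (real u / (real n + 1)))))"
    proof -
      have "(\<Sum>u\<in>{1..n}. exp (s * b u)) = (\<Sum>u\<in>{1..n}. (\<lambda>t. exp (s * (t / (real n + 1)))) (real n + 1 - real u))"
        unfolding b_def by simp
      also have "\<dots> = (\<Sum>u\<in>{1..n}. exp (s * (real u / (real n + 1))))"
        by (rule sum_reflect)
      finally have "(\<Sum>u\<in>{1..n}. exp (s * b u)) = (\<Sum>u\<in>{1..n}. exp (s * (real u / (real n + 1))))" .
      then show ?thesis unfolding sum_distrib_left[symmetric] sum.distrib a_def by simp
    qed
    also have "\<dots> \<le> B * exp (4 * r) * (2 * ((real n + 1) * exp s / s))"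
      using geom_bound[OF s0 n0] B1 by (intro mult_left_mono) auto
    finally have "mg n l \<le> B * exp (4 * r) * (2 * ((real n + 1) * exp s / s)) / real n"
      by (simp add: divide_right_mono)
    also have "\<dots> = (B * exp (4 * r) * 2 * exp s / s) * ((real n + 1) / real n)"
      by (simp add: field_simps)
    also have "\<dots> \<le> (B * exp (4 * r) * 2 * exp s / s) * 2"
      using n0 s0 B1 by (intro mult_left_mono) (auto simp: field_simps)
    also have "\<dots> = exp s" unfolding s_def using B1 by (simp add: field_simps)
    finally show ?thesis unfolding s_def .
  qed
qed

lemma mg_levels: "\<exists>B\<ge>1. \<forall>n l. \<bar>l\<bar> \<le> 2 ^ j / 16 \<longrightarrow> mg n l \<le> B"
proof (induction j)
  case 0
  have "mg n l \<le> exp (1/4)" if "\<bar>l\<bar> \<le> 1/16" for n l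
  proof -
    have "l\<^sup>2 = \<bar>l\<bar>\<^sup>2" by simp
    also have "\<dots> \<le> (1/16)\<^sup>2" using that by (intro power_mono) auto
    finally have "64 * l\<^sup>2 \<le> 1/4" by (simp add: power2_eq_square)
    then show ?thesis using mg_base[OF that, of n] by (meson exp_le_cancel_iff order_trans)
  qed
  then show ?case by (intro exI[of _ "exp (1/4)"]) auto
next
  case (Suc j)
  then obtain B where B: "B \<ge> 1" "\<And>n l. \<bar>l\<bar> \<le> 2 ^ j / 16 \<Longrightarrow> mg n l \<le> B" by auto
  have "mg n l \<le> exp (4 * B * exp (4 * (2 ^ j / 16)))" if "\<bar>l\<bar> \<le> 2 ^ Suc j / 16" for n l
    using B that by (intro mg_double[of B "2 ^ j / 16"]) auto
  moreover have "1 \<le> exp (4 * B * exp (4 * (2 ^ j / 16 :: real)))" using B by simp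
  ultimately show ?case by blast
qed

lemma mg_bounded: "\<exists>B. \<forall>n. mg n l \<le> B"
proof -
  obtain j where "16 * \<bar>l\<bar> < 2 ^ j" using real_arch_pow[of 2 "16 * \<bar>l\<bar>"] by auto
  then have "\<bar>l\<bar> \<le> 2 ^ j / 16" by simp
  moreover obtain B where "\<forall>n l. \<bar>l\<bar> \<le> 2 ^ j / 16 \<longrightarrow> mg n l \<le> B" using mg_levels[of j] by auto
  ultimately show ?thesis by blast
qed




lemma exp_sub_one_le: "0 \<le> (y::real) \<Longrightarrow> exp y - 1 \<le> y * exp y"
proof -
  assume y: "0 \<le> y"
  have "1 - y \<le> exp (- y)" using exp_ge_add_one_self[of "-y"] by simp
  then have "(1 - y) * exp y \<le> exp (- y) * exp y" by (intro mult_right_mono) auto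
  then show ?thesis by (simp add: exp_minus algebra_simps)
qed

lemma exp_diff_bound:
  fixes t \<delta> :: real
  assumes d: "0 \<le> \<delta>" "\<delta> \<le> 1"
  shows "\<bar>exp ((1 + \<delta>) * t) - exp t\<bar> \<le> \<delta> * (exp (3 * t) + exp (- 3 * t))"
proof (cases "t \<ge> 0")
  case True
  have dt: "0 \<le> \<delta> * t" "\<delta> * t \<le> t" using d True by (auto simp: mult_left_le_one_le)
  have e: "exp ((1 + \<delta>) * t) - exp t = exp t * (exp (\<delta> * t) - 1)"
    by (simp add: algebra_simps exp_add[symmetric])
  have nn: "0 \<le> exp (\<delta> * t) - 1" using dt by simp
  have "exp t * (exp (\<delta> * t) - 1) \<le> exp t * ((\<delta> * t) * exp (\<delta> * t))"
    using exp_sub_one_le[OF dt(1)] by (intro mult_left_mono) auto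
  also have "\<dots> \<le> exp t * ((\<delta> * t) * exp t)"
    using dt by (intro mult_left_mono) auto
  also have "\<dots> = \<delta> * (t * exp (2 * t))" by (simp add: algebra_simps exp_add[symmetric])
  also have "\<dots> \<le> \<delta> * (exp t * exp (2 * t))"
  proof -
    have "t \<le> exp t" using exp_ge_add_one_self[of t] by linarith
    then show ?thesis using d by (intro mult_left_mono mult_right_mono) auto
  qed
  also have "\<dots> = \<delta> * exp (3 * t)" by (simp add: exp_add[symmetric])
  also have "\<dots> \<le> \<delta> * (exp (3 * t) + exp (- 3 * t))" using d by (intro mult_left_mono) auto
  finally show ?thesis unfolding e using nn by simp
next
  case False
  then have t: "t < 0" by simp
  have dt0: "0 \<le> \<delta> * (- t)" using d t by (intro mult_nonneg_nonneg) auto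
  have dt1: "\<delta> * (- t) \<le> - t" using d t by (intro mult_left_le_one_le) auto
  have dt: "0 \<le> - \<delta> * t" "- \<delta> * t \<le> - t" using dt0 dt1 by simp_all
  have e: "exp t - exp ((1 + \<delta>) * t) = exp ((1 + \<delta>) * t) * (exp (- \<delta> * t) - 1)"
    by (simp add: algebra_simps exp_add[symmetric])
  have nn: "0 \<le> exp (- \<delta> * t) - 1" using dt by simp
  have "exp ((1 + \<delta>) * t) * (exp (- \<delta> * t) - 1) \<le> exp ((1 + \<delta>) * t) * ((- \<delta> * t) * exp (- \<delta> * t))"
    using exp_sub_one_le[OF dt(1)] by (intro mult_left_mono) auto
  also have "\<dots> = \<delta> * (- t) * exp t" by (simp add: algebra_simps exp_add[symmetric])
  also have "\<dots> \<le> \<delta> * (- t) * 1" using dt0 t by (intro mult_left_mono) auto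
  also have "\<dots> \<le> \<delta> * exp (- 3 * t)"
  proof -
    have "- t \<le> exp (- 3 * t)" using t exp_ge_add_one_self[of "- 3 * t"] by linarith
    then have "\<delta> * (- t) \<le> \<delta> * exp (- 3 * t)" using d by (intro mult_left_mono) auto
    then show ?thesis by simp
  qed
  also have "\<dots> \<le> \<delta> * (exp (3 * t) + exp (- 3 * t))" using d by (intro mult_left_mono) auto
  finally have "exp t - exp ((1 + \<delta>) * t) \<le> \<delta> * (exp (3 * t) + exp (- 3 * t))" unfolding e .
  moreover have "exp ((1 + \<delta>) * t) \<le> exp t" using d t by (simp add: mult_nonneg_nonpos)
  ultimately show ?thesis by simp
qed

lemma mg_diff:
  assumes d: "0 \<le> \<delta>" "\<delta> \<le> 1"
  shows "\<bar>mg n ((1 + \<delta>) * l) - mg n l\<bar> \<le> \<delta> * (mg n (3 * l) + mg n (- 3 * l))"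
proof -
  have pw: "\<bar>exp ((1 + \<delta>) * l * qs_hatY n x) - exp (l * qs_hatY n x)\<bar>
      \<le> \<delta> * (exp (3 * l * qs_hatY n x) + exp (- 3 * l * qs_hatY n x))" for x
    using exp_diff_bound[OF d, of "l * qs_hatY n x"] by (simp add: mult.assoc)
  have pw1: "exp ((1 + \<delta>) * l * qs_hatY n x) \<le> exp (l * qs_hatY n x) + \<delta> * (exp (3 * l * qs_hatY n x) + exp (- 3 * l * qs_hatY n x))" for x
    using pw[of x] unfolding abs_le_iff by linarith
  have pw2: "exp (l * qs_hatY n x) \<le> exp ((1 + \<delta>) * l * qs_hatY n x) + \<delta> * (exp (3 * l * qs_hatY n x) + exp (- 3 * l * qs_hatY n x))" for x
    using pw[of x] unfolding abs_le_iff by linarith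
  have "mg n ((1 + \<delta>) * l) - mg n l \<le> \<delta> * (mg n (3 * l) + mg n (- 3 * l))"
  proof -
    have "mg n ((1 + \<delta>) * l) \<le> QE n (\<lambda>x. exp (l * qs_hatY n x) + \<delta> * (exp (3 * l * qs_hatY n x) + exp (- 3 * l * qs_hatY n x)))"
      unfolding mg_def using pw1 by (intro QE_mono) (simp add: mult.assoc)
    then show ?thesis unfolding mg_def by (simp add: QE_add QE_cmult mult.assoc)
  qed
  moreover have "mg n l - mg n ((1 + \<delta>) * l) \<le> \<delta> * (mg n (3 * l) + mg n (- 3 * l))"
  proof -
    have "mg n l \<le> QE n (\<lambda>x. exp ((1 + \<delta>) * l * qs_hatY n x) + \<delta> * (exp (3 * l * qs_hatY n x) + exp (- 3 * l * qs_hatY n x)))"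
      unfolding mg_def using pw2 by (intro QE_mono) (simp add: mult.assoc)
    then show ?thesis unfolding mg_def by (simp add: QE_add QE_cmult mult.assoc)
  qed
  ultimately show ?thesis by simp
qed




theorem theorem7p1:
  fixes M :: "real measure" and lam :: real
  assumes "real_distribution M"
    and "weak_conv_m qs_normalized_law M"
  shows "mono (\<lambda>n. measure_pmf.expectation (qs_comparisons n) (\<lambda>x. exp (lam * qs_hatY n x)))
    \<and> integrable M (\<lambda>y. exp (lam * y))
    \<and> (\<lambda>n. measure_pmf.expectation (qs_comparisons n) (\<lambda>x. exp (lam * qs_hatY n x)))
        \<longlonglongrightarrow> (\<integral>y. exp (lam * y) \<partial>M)
    \<and> (\<forall>n. measure_pmf.expectation (qs_comparisons n) (\<lambda>x. exp (lam * qs_hatY n x))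
           \<le> (\<integral>y. exp (lam * y) \<partial>M))"
proof -
  interpret Mr: real_distribution M by (rule assms(1))
  have mgeq: "(\<lambda>n. measure_pmf.expectation (qs_comparisons n) (\<lambda>x. exp (lam * qs_hatY n x))) = (\<lambda>n. mg n lam)"
    by (simp add: mg_def QE_def)
  have inc: "incseq (\<lambda>n. mg n lam)" by (rule incseq_SucI) (rule mg_mono_n)
  obtain B where B: "\<And>n. mg n lam \<le> B" using mg_bounded[of lam] by auto
  obtain B3 where B3: "\<And>n. mg n (3 * lam) \<le> B3" using mg_bounded by blast
  obtain B3' where B3': "\<And>n. mg n (- 3 * lam) \<le> B3'" using mg_bounded by blast
  obtain B2 where B2: "\<And>n. mg n (2 * lam) \<le> B2" using mg_bounded by blast
  obtain B6 where B6: "\<And>n. mg n (3 * (2 * lam)) \<le> B6" using mg_bounded by blast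
  obtain B6' where B6': "\<And>n. mg n (- 3 * (2 * lam)) \<le> B6'" using mg_bounded by blast
  define L where "L = (SUP n. mg n lam)"
  have conv: "(\<lambda>n. mg n lam) \<longlonglongrightarrow> L"
    unfolding L_def using B inc by (intro LIMSEQ_incseq_SUP bdd_aboveI2[where M=B]) auto
  define z where "z n x = (real x - qs_mean n) / real n" for n x
  define mZ where "mZ c n = QE n (\<lambda>x. exp (c * z n x))" for c n
  have mZeq: "mZ c n = mg n ((1 + 1 / real n) * c)" if n: "n > 0" for c n
  proof -
    have e: "1 + 1 / real n = (real n + 1) / real n" using n by (simp add: field_simps)
    have n1: "real n + 1 \<noteq> 0" by simp
    have "c * z n x = ((1 + 1 / real n) * c) * qs_hatY n x" for x
      unfolding z_def qs_hatY_def e using n1 by simp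
    then show ?thesis unfolding mZ_def mg_def by (simp only:)
  qed
  have mZconv: "(\<lambda>n. mZ lam n) \<longlonglongrightarrow> L"
  proof -
    have "(\<lambda>n. mZ lam n - mg n lam) \<longlonglongrightarrow> 0"
    proof (rule Lim_null_comparison)
      show "\<forall>\<^sub>F n in sequentially. norm (mZ lam n - mg n lam) \<le> (B3 + B3') / real n"
        using eventually_gt_at_top[of 0]
      proof eventually_elim
        case (elim n)
        have d: "0 \<le> 1 / real n" "1 / real n \<le> 1" using elim by auto
        have "norm (mZ lam n - mg n lam) \<le> 1 / real n * (mg n (3 * lam) + mg n (- 3 * lam))"
          using mg_diff[OF d, of n lam] elim by (simp add: mZeq)
        also have "\<dots> \<le> 1 / real n * (B3 + B3')"
          using B3 B3' d by (intro mult_left_mono add_mono) auto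
        finally show ?case by simp
      qed
      show "(\<lambda>n. (B3 + B3') / real n) \<longlonglongrightarrow> 0" by (rule lim_const_over_n)
    qed
    from tendsto_add[OF this conv] show ?thesis by simp
  qed
  define D2 where "D2 = B2 + B6 + B6'"
  have mZ2: "mZ (2 * lam) n \<le> D2" if n: "n > 0" for n
  proof -
    have d: "0 \<le> 1 / real n" "1 / real n \<le> 1" using n by auto
    have "mZ (2 * lam) n - mg n (2 * lam) \<le> 1 / real n * (mg n (3 * (2 * lam)) + mg n (- 3 * (2 * lam)))"
      using mg_diff[OF d, of n "2 * lam"] n by (simp add: mZeq)
    also have "\<dots> \<le> 1 * (B6 + B6')"
      using B6 B6' d mg_pos[of n "3 * (2 * lam)"] mg_pos[of n "- 3 * (2 * lam)"]
      by (intro mult_mono add_mono) auto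
    finally show ?thesis using B2[of n] unfolding D2_def by simp
  qed
  have law: "qs_normalized_law n = distr (measure_pmf (qs_comparisons n)) borel (z n)" for n
    unfolding qs_normalized_law_def z_def ..
  have rd: "real_distribution (qs_normalized_law n)" for n
    unfolding law by (rule prob_space.real_distribution_distr) (auto simp: prob_space_measure_pmf)
  have intlaw: "integral\<^sup>L (qs_normalized_law n) f = QE n (\<lambda>x. f (z n x))"
    if "f \<in> borel_measurable borel" for n and f :: "real \<Rightarrow> real"
    unfolding law QE_def using that by (simp add: integral_distr)
  define fK where "fK K y = min (exp (lam * y)) K" for K y :: real
  have fK_meas: "fK K \<in> borel_measurable borel" for K unfolding fK_def by measurable
  have wc: "(\<lambda>n. QE n (\<lambda>x. fK K (z n x))) \<longlonglongrightarrow> integral\<^sup>L M (fK K)" if K: "K \<ge> 0" for K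
  proof -
    have "(\<lambda>n. integral\<^sup>L (qs_normalized_law n) (fK K)) \<longlonglongrightarrow> integral\<^sup>L M (fK K)"
    proof (rule weak_conv_imp_integral_bdd_continuous_conv[OF rd assms(1) assms(2)])
      show "isCont (fK K) x" for x unfolding fK_def by (intro continuous_intros)
      show "norm (fK K x) \<le> K" for x unfolding fK_def using K by auto
    qed
    then show ?thesis unfolding intlaw[OF fK_meas] .
  qed
  have upper: "integral\<^sup>L M (fK K) \<le> L" if K: "K \<ge> 0" for K
  proof (rule LIMSEQ_le[OF wc[OF K] mZconv])
    show "\<exists>N. \<forall>n\<ge>N. QE n (\<lambda>x. fK K (z n x)) \<le> mZ lam n"
      unfolding mZ_def fK_def by (intro exI[of _ 0] allI impI QE_mono) auto
  qed
  have lower: "L \<le> integral\<^sup>L M (fK K) + D2 / K" if K: "K > 0" for K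
  proof (rule LIMSEQ_le[OF mZconv tendsto_add[OF wc tendsto_const]])
    show "K \<ge> 0" using K by simp
    show "\<exists>N. \<forall>n\<ge>N. mZ lam n \<le> QE n (\<lambda>x. fK K (z n x)) + D2 / K"
    proof (intro exI[of _ 1] allI impI)
      fix n :: nat assume n: "n \<ge> 1"
      have pw: "exp (lam * z n x) \<le> fK K (z n x) + exp (2 * lam * z n x) / K" for x
      proof -
        define e where "e = exp (lam * z n x)"
        have e0: "e > 0" unfolding e_def by simp
        have e2: "exp (2 * lam * z n x) = e * e" unfolding e_def by (simp add: exp_add[symmetric])
        show ?thesis
        proof (cases "e \<le> K")
          case True
          then show ?thesis unfolding e2 fK_def e_def[symmetric] using K e0 by simp
        next
          case False
          then have "e \<le> e * e / K" using K e0 by (simp add: field_simps mult_le_cancel_right)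
          then show ?thesis unfolding e2 fK_def e_def[symmetric] using K e0 False by simp
        qed
      qed
      have "mZ lam n \<le> QE n (\<lambda>x. fK K (z n x) + exp (2 * lam * z n x) / K)"
        unfolding mZ_def by (intro QE_mono pw)
      also have "\<dots> = QE n (\<lambda>x. fK K (z n x)) + mZ (2 * lam) n / K"
        unfolding mZ_def by (simp add: QE_add divide_inverse QE_multc)
      also have "\<dots> \<le> QE n (\<lambda>x. fK K (z n x)) + D2 / K"
        using mZ2[of n] n K by (simp add: divide_right_mono)
      finally show "mZ lam n \<le> QE n (\<lambda>x. fK K (z n x)) + D2 / K" .
    qed
  qed
  define f where "f k = fK (real k)" for k :: nat
  have f_int: "integrable M (f k)" for k
  proof (rule Mr.integrable_const_bound[where B="real k"])
    show "AE x in M. norm (f k x) \<le> real k" unfolding f_def fK_def by auto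
    show "f k \<in> borel_measurable M" unfolding f_def fK_def by measurable
  qed
  have f_mono: "mono (\<lambda>k. f k x)" for x
    unfolding f_def fK_def by (intro monoI) (auto intro: min.mono)
  have f_pos: "0 \<le> f k x" for k x unfolding f_def fK_def by auto
  have f_lim: "(\<lambda>k. f k x) \<longlonglongrightarrow> exp (lam * x)" for x
  proof (rule tendsto_eventually)
    obtain N :: nat where N: "exp (lam * x) \<le> real N" using real_arch_simple by blast
    show "\<forall>\<^sub>F k in sequentially. f k x = exp (lam * x)"
      using eventually_ge_at_top[of N]
      by eventually_elim (use N in \<open>auto simp: f_def fK_def\<close>)
  qed
  define X where "X = (SUP k. integral\<^sup>L M (f k))"
  have iinc: "incseq (\<lambda>k. integral\<^sup>L M (f k))"
    by (intro monoI integral_mono f_int) (use f_mono in \<open>auto simp: mono_def\<close>)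
  have ibd: "integral\<^sup>L M (f k) \<le> L" for k unfolding f_def by (rule upper) simp
  have ilim: "(\<lambda>k. integral\<^sup>L M (f k)) \<longlonglongrightarrow> X"
    unfolding X_def using iinc ibd by (intro LIMSEQ_incseq_SUP bdd_aboveI2[where M=L]) auto
  have meas: "(\<lambda>y. exp (lam * y)) \<in> borel_measurable M" by measurable
  have intM: "integrable M (\<lambda>y. exp (lam * y))" and intX: "integral\<^sup>L M (\<lambda>y. exp (lam * y)) = X"
    using integral_monotone_convergence_nonneg[OF f_int _ _ _ ilim meas] f_mono f_pos f_lim by auto
  have XL: "X \<le> L" using ilim ibd by (intro LIMSEQ_le_const2) auto
  have LX: "L \<le> X"
  proof (rule LIMSEQ_le_const)
    show "(\<lambda>k. integral\<^sup>L M (f k) + D2 / real k) \<longlonglongrightarrow> X"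
      using tendsto_add[OF ilim lim_const_over_n[of D2]] by simp
    show "\<exists>N. \<forall>k\<ge>N. L \<le> integral\<^sup>L M (f k) + D2 / real k"
    proof (intro exI[of _ 1] allI impI)
      fix k :: nat assume k: "k \<ge> 1"
      then show "L \<le> integral\<^sup>L M (f k) + D2 / real k" unfolding f_def by (intro lower) simp
    qed
  qed
  have LI: "L = integral\<^sup>L M (\<lambda>y. exp (lam * y))" using XL LX intX by simp
  have allle0: "\<forall>n. mg n lam \<le> L" using incseq_le[OF inc conv] by blast
  have allle: "\<forall>n. measure_pmf.expectation (qs_comparisons n) (\<lambda>x. exp (lam * qs_hatY n x)) \<le> L"
    using allle0 by (simp add: mg_def QE_def)
  show ?thesis unfolding mgeq LI[symmetric]
    using inc intM conv allle by (intro conjI)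
qed


end
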